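(* Let $t\ge1$, $w\in\mathbb{R}^t_{++}$, $\rho>0$ and $d\in\mathbb{R}^t_{++}$. Let $d^w\in\mathbb{R}^t$ be given by $d^w_i:=d_i/w_i$, and let $\Pi$ be a permutation matrix such that $\Pi d^w$ is sorted in non-increasing order. Put $\tilde d=\Pi d$, $\tilde w=\Pi w$, and for $i=1,\dots,t$, $$s_i=\sum_{j=1}^i\tilde w_j\tilde d_j,\qquad L_i=\sum_{j=1}^i\tilde w_j^2,\qquad \alpha_i=\frac{s_i}{1+2\rho L_i},$$ and let $\bar\alpha=\max_{1\le i\le t}\alpha_i$. Then $$x(d):=\arg\min_{x\in\mathbb{R}^t_+}\Big\{\frac12\|x-d\|^2+\rho\|w\circ x\|_1^2\Big\}=(d-2\rho\bar\alpha w)^+ .$$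
   Context: $\circ$ is the Hadamard product; for a vector $z$, $z^+$ denotes the entrywise positive part $\max\{z_i,0\}$. *)

theory Defs
  imports "HOL-Analysis.Analysis"
begin

end

theory Submission
  imports Defs
begin

lemma norm_sq_vec: "(norm (x::real^'n))^2 = (\<Sum>i\<in>UNIV. (x$i)^2)"
  unfolding power2_norm_eq_inner inner_vec_def by (simp add: power2_eq_square)

theorem proposition3p3:
  fixes d w :: "real ^ 'n" and rho :: real and sigma :: "nat \<Rightarrow> 'n"
  assumes w_pos: "\<forall>i. w $ i > 0"
    and d_pos: "\<forall>i. d $ i > 0"
    and rho_pos: "rho > 0"
    and sigma_bij: "bij_betw sigma {1..CARD('n)} UNIV"
    and sorted: "\<forall>i j. 1 \<le> i \<and> i \<le> j \<and> j \<le> CARD('n) \<longrightarrow>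
                   d $ sigma j / w $ sigma j \<le> d $ sigma i / w $ sigma i"
  defines "s \<equiv> \<lambda>i. \<Sum>j=1..i. w $ sigma j * d $ sigma j"
    and "L \<equiv> \<lambda>i. \<Sum>j=1..i. (w $ sigma j)\<^sup>2"
  defines "alpha \<equiv> \<lambda>i. s i / (1 + 2 * rho * L i)"
  defines "abar \<equiv> Max (alpha ` {1..CARD('n)})"
  defines "F \<equiv> \<lambda>x::real ^ 'n. (1/2) * (norm (x - d))\<^sup>2 + rho * (\<Sum>i\<in>UNIV. \<bar>w $ i * x $ i\<bar>)\<^sup>2"
  shows "{x. (\<forall>i. 0 \<le> x $ i) \<and> (\<forall>y. (\<forall>i. 0 \<le> y $ i) \<longrightarrow> F x \<le> F y)}
           = {\<chi> i. max (d $ i - 2 * rho * abar * w $ i) 0}"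
proof -
  define n where "n = CARD('n)"
  define c where "c = 2*rho*abar"
  define x0 :: "real^'n" where "x0 = (\<chi> i. max (d$i - 2*rho*abar*w$i) 0)"
  have n1: "1 \<le> n" unfolding n_def by (simp add: Suc_leI)
  have fin: "finite (alpha ` {1..n})" by simp
  have ne: "alpha ` {1..n} \<noteq> {}" using n1 by auto
  have "abar \<in> alpha ` {1..n}" using Max_in[OF fin ne] unfolding abar_def n_def .
  then obtain k where k: "k \<in> {1..n}" "abar = alpha k" by auto
  have ge: "alpha m \<le> abar" if "m \<in> {1..n}" for m
    using Max_ge[OF fin] that unfolding abar_def n_def by auto
  have Lnn: "L i \<ge> 0" for i unfolding L_def by (simp add: sum_nonneg)
  have den: "1 + 2*rho*L i > 0" for i
    using Lnn[of i] rho_pos by (simp add: add_pos_nonneg)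
  have alpha1: "alpha 1 > 0"
    using den[of 1] w_pos d_pos unfolding alpha_def s_def by simp
  have apos: "abar > 0" using ge[of 1] n1 alpha1 by force
  define P where "P = (\<Sum>j=1..n. w$sigma j * max (d$sigma j - c*w$sigma j) 0)"
  have lower: "abar \<le> P"
  proof -
    have "abar = s k - c * L k"
      using k(2) den[of k] unfolding alpha_def c_def by (simp add: field_simps)
    also have "\<dots> = (\<Sum>j=1..k. w$sigma j * (d$sigma j - c*w$sigma j))"
      unfolding s_def L_def
      by (simp add: sum_subtractf sum_distrib_left right_diff_distrib power2_eq_square algebra_simps)
    also have "\<dots> \<le> (\<Sum>j=1..k. w$sigma j * max (d$sigma j - c*w$sigma j) 0)"
      by (rule sum_mono) (simp add: mult_left_mono w_pos less_imp_le)
    also have "\<dots> \<le> P"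
      unfolding P_def by (rule sum_mono2) (use k w_pos in \<open>auto intro: mult_nonneg_nonneg simp: less_imp_le\<close>)
    finally show ?thesis .
  qed
  define M where "M = {j\<in>{1..n}. d$sigma j > c * w$sigma j}"
  define m where "m = Max (insert 0 M)"
  have finM: "finite M" unfolding M_def by simp
  have mle: "m \<le> n" unfolding m_def using finM by (simp add: M_def)
  have mM: "m = 0 \<or> m \<in> M" unfolding m_def using Max_in[of "insert 0 M"] finM by auto
  have jM: "j \<le> m" if "j \<in> M" for j unfolding m_def using finM that by simp
  have eq: "w$sigma j * max (d$sigma j - c*w$sigma j) 0
      = (if j \<in> {1..m} then w$sigma j * (d$sigma j - c*w$sigma j) else 0)" if j: "j \<in> {1..n}" for j
  proof (cases "j \<le> m")
    case True
    with j have m0: "m \<in> M" using mM by auto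
    have "d $ sigma m / w $ sigma m \<le> d $ sigma j / w $ sigma j"
      using sorted True j mle unfolding n_def by auto
    moreover have "c < d $ sigma m / w $ sigma m"
      using m0 w_pos unfolding M_def by (simp add: pos_less_divide_eq)
    ultimately have "c < d $ sigma j / w $ sigma j" by linarith
    hence "c * w $ sigma j < d $ sigma j" using w_pos by (simp add: pos_less_divide_eq)
    thus ?thesis using True j by auto
  next
    case False
    hence "j \<notin> M" using jM by auto
    hence "d $ sigma j \<le> c * w $ sigma j" using j unfolding M_def by auto
    thus ?thesis using False by auto
  qed
  have upper: "P \<le> abar"
  proof -
    have "P = (\<Sum>j\<in>{1..n}. (if j \<in> {1..m} then w$sigma j * (d$sigma j - c*w$sigma j) else 0))"
      unfolding P_def by (rule sum.cong) (use eq in auto)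
    also have "\<dots> = (\<Sum>j\<in>{1..n} \<inter> {1..m}. w$sigma j * (d$sigma j - c*w$sigma j))"
      by (rule sum.inter_restrict[symmetric]) simp
    also have "{1..n} \<inter> {1..m} = {1..m}" using mle by auto
    also have "(\<Sum>j\<in>{1..m}. w$sigma j * (d$sigma j - c*w$sigma j)) = s m - c * L m"
      unfolding s_def L_def
      by (simp add: sum_subtractf sum_distrib_left right_diff_distrib power2_eq_square algebra_simps)
    also have "\<dots> \<le> abar"
    proof (cases "m = 0")
      case True thus ?thesis using apos unfolding s_def L_def by simp
    next
      case False
      hence "m \<in> {1..n}" using mle by auto
      hence "s m / (1 + 2*rho*L m) \<le> abar" using ge unfolding alpha_def by auto
      hence "s m \<le> abar * (1 + 2*rho*L m)" using den[of m] by (simp add: pos_divide_le_eq)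
      thus ?thesis unfolding c_def by (simp add: algebra_simps)
    qed
    finally show ?thesis .
  qed
  have T0: "(\<Sum>i\<in>UNIV. w$i * x0$i) = abar"
  proof -
    have "(\<Sum>i\<in>UNIV. w$i * x0$i) = (\<Sum>j\<in>{1..n}. w$sigma j * x0$sigma j)"
      using sum.reindex_bij_betw[OF sigma_bij, of "\<lambda>i. w$i * x0$i"] n_def by simp
    also have "\<dots> = P" unfolding P_def x0_def c_def by (simp add: mult.assoc)
    finally show ?thesis using lower upper by simp
  qed
  have x0nn: "\<forall>i. 0 \<le> x0$i" unfolding x0_def by simp
  have Fform: "F y = (1/2) * (\<Sum>i\<in>UNIV. (y$i - d$i)^2) + rho * (\<Sum>i\<in>UNIV. w$i * y$i)^2"
    if "\<forall>i. 0 \<le> y$i" for y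
  proof -
    have "(\<Sum>i\<in>UNIV. \<bar>w $ i * y $ i\<bar>) = (\<Sum>i\<in>UNIV. w$i * y$i)"
      using that w_pos by (intro sum.cong) (auto simp: less_imp_le)
    thus ?thesis unfolding F_def norm_sq_vec by simp
  qed
  have key: "F y - F x0 \<ge> (1/2) * (\<Sum>i\<in>UNIV. (y$i - x0$i)^2)" if y: "\<forall>i. 0 \<le> y$i" for y
  proof -
    define Q where "Q = (\<Sum>i\<in>UNIV. (y$i - x0$i)^2)"
    define E where "E = (\<Sum>i\<in>UNIV. (x0$i - d$i) * (y$i - x0$i))"
    define D where "D = (\<Sum>i\<in>UNIV. w$i * (y$i - x0$i))"
    define G where "G = (\<Sum>i\<in>UNIV. (x0$i - d$i + 2*rho*abar*w$i) * (y$i - x0$i))"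
    have h1: "(\<Sum>i\<in>UNIV. (y$i - d$i)^2) = (\<Sum>i\<in>UNIV. (x0$i - d$i)^2) + 2 * E + Q"
    proof -
      have "(\<Sum>i\<in>UNIV. (y$i - d$i)^2) = (\<Sum>i\<in>UNIV. (x0$i - d$i)^2 + 2 * ((x0$i - d$i) * (y$i - x0$i)) + (y$i - x0$i)^2)"
        by (rule sum.cong) (auto simp: power2_eq_square algebra_simps)
      thus ?thesis unfolding E_def Q_def by (simp add: sum.distrib sum_distrib_left)
    qed
    have h2: "(\<Sum>i\<in>UNIV. w$i * y$i) = abar + D"
    proof -
      have "(\<Sum>i\<in>UNIV. w$i * y$i) = (\<Sum>i\<in>UNIV. w$i * x0$i + w$i * (y$i - x0$i))"
        by (rule sum.cong) (auto simp: algebra_simps)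
      thus ?thesis unfolding D_def using T0 by (simp add: sum.distrib)
    qed
    have hG: "G = E + 2*rho*abar*D"
    proof -
      have "G = (\<Sum>i\<in>UNIV. (x0$i - d$i) * (y$i - x0$i) + 2*rho*abar*(w$i * (y$i - x0$i)))"
        unfolding G_def by (rule sum.cong) (auto simp: algebra_simps)
      also have "\<dots> = E + 2*rho*abar*D"
        unfolding E_def D_def by (simp add: sum.distrib sum_distrib_left)
      finally show ?thesis .
    qed
    have Gnn: "G \<ge> 0" unfolding G_def
    proof (rule sum_nonneg)
      fix i :: 'n
      show "0 \<le> (x0$i - d$i + 2*rho*abar*w$i) * (y$i - x0$i)"
      proof (cases "d$i - 2*rho*abar*w$i > 0")
        case True thus ?thesis unfolding x0_def by simp
      next
        case False thus ?thesis unfolding x0_def using y by (simp add: mult_nonneg_nonneg)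
      qed
    qed
    have "F y - F x0 = G + Q/2 + rho * D^2"
      unfolding Fform[OF y] Fform[OF x0nn] h1 h2 T0 hG
      by (simp add: power2_eq_square algebra_simps)
    moreover have "rho * D^2 \<ge> 0" using rho_pos by simp
    ultimately show ?thesis unfolding Q_def using Gnn by linarith
  qed
  have opt: "F x0 \<le> F y" if "\<forall>i. 0 \<le> y$i" for y
  proof -
    have "0 \<le> (\<Sum>i\<in>UNIV. (y$i - x0$i)^2)" by (simp add: sum_nonneg)
    thus ?thesis using key[OF that] by linarith
  qed
  have uniq: "x = x0" if "\<forall>i. 0 \<le> x$i" "F x \<le> F x0" for x
  proof -
    have "(\<Sum>i\<in>UNIV. (x$i - x0$i)^2) \<le> 0" using key[OF that(1)] that(2) by linarith
    hence "(\<Sum>i\<in>UNIV. (x$i - x0$i)^2) = 0" by (simp add: sum_nonneg antisym)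
    hence "\<forall>i. (x$i - x0$i)^2 = 0" by (simp add: sum_nonneg_eq_0_iff)
    thus ?thesis by (simp add: vec_eq_iff)
  qed
  show ?thesis
  proof
    show "{x. (\<forall>i. 0 \<le> x $ i) \<and> (\<forall>y. (\<forall>i. 0 \<le> y $ i) \<longrightarrow> F x \<le> F y)} \<subseteq> {\<chi> i. max (d $ i - 2 * rho * abar * w $ i) 0}"
      using uniq x0nn unfolding x0_def[symmetric] by blast
    show "{\<chi> i. max (d $ i - 2 * rho * abar * w $ i) 0} \<subseteq> {x. (\<forall>i. 0 \<le> x $ i) \<and> (\<forall>y. (\<forall>i. 0 \<le> y $ i) \<longrightarrow> F x \<le> F y)}"
      using opt x0nn unfolding x0_def[symmetric] by blast
  qed
qed

end
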